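(* Let $X=(x_1,\dots,x_n)$, $n>0$, be a finite sequence of positive reals and $0<q\le1$. For a finite sequence $W$ of length $k$ with sorted values $w_{(1)}\le\dots\le w_{(k)}$, put $Q^1_q(W)=w_{(\lceil qk\rceil)}$. Consider the positive circllhist bins $B_{e,d}=[a,b)$ with $a=d\cdot10^{e-1}$, $b=(d+1)\cdot10^{e-1}$, $e\in\mathbb{Z}$, $d\in\{10,\dots,99\}$, and counts $H(e,d)=\#\{j:x_j\in B_{e,d}\}$. Let $\hat X^p$ be the paretro-midpoint resampling (for each bin, $H(e,d)$ copies of $\frac{2ab}{a+b}$) and $\hat X^f$ the fair resampling (for each bin with $H(e,d)=k$, the points $a+\frac{l}{k+1}(b-a)$, $l=1,\dots,k$). Then: (1) $|Q^1_q(X)-Q^1_q(\hat X^p)|\le\frac1{21}Q^1_q(X)$; (2) $|Q^1_q(X)-Q^1_q(\hat X^f)|\le\frac1{10}Q^1_q(X)$; and if the bin containing $Q^1_q(X)$ contains exactly one element of $X$, then $|Q^1_q(X)-Q^1_q(\hat X^f)|\le\frac{1}{20}Q^1_q(X)$.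
   Context: The resamplings $\hat X^p$ and $\hat X^f$ are finite sequences of length $n$ (taken over all bins). *)

theory Defs
  imports Complex_Main "HOL-Library.Multiset"
begin

definition Q1 :: "real \<Rightarrow> real list \<Rightarrow> real" where
  "Q1 q W = sort W ! (nat \<lceil>q * real (length W)\<rceil> - 1)"

definition bin_lo :: "int \<Rightarrow> nat \<Rightarrow> real" where
  "bin_lo e d = real d * 10 powr (real_of_int e - 1)"

definition bin_hi :: "int \<Rightarrow> nat \<Rightarrow> real" where
  "bin_hi e d = (real d + 1) * 10 powr (real_of_int e - 1)"

definition in_bin :: "int \<Rightarrow> nat \<Rightarrow> real \<Rightarrow> bool" where
  "in_bin e d x \<longleftrightarrow> bin_lo e d \<le> x \<and> x < bin_hi e d"

definition H :: "real list \<Rightarrow> int \<Rightarrow> nat \<Rightarrow> nat" where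
  "H X e d = card {j. j < length X \<and> in_bin e d (X ! j)}"

definition occ_bins :: "real list \<Rightarrow> (int \<times> nat) set" where
  "occ_bins X = {(e, d). d \<in> {10..99} \<and> H X e d \<noteq> 0}"

definition paretro_mid :: "int \<Rightarrow> nat \<Rightarrow> real" where
  "paretro_mid e d = 2 * bin_lo e d * bin_hi e d / (bin_lo e d + bin_hi e d)"

definition resample_p :: "real list \<Rightarrow> real list" where
  "resample_p X = sorted_list_of_multiset
     (\<Sum>(e, d) \<in> occ_bins X. replicate_mset (H X e d) (paretro_mid e d))"

definition fair_points :: "int \<Rightarrow> nat \<Rightarrow> nat \<Rightarrow> real list" where
  "fair_points e d k = map (\<lambda>l. bin_lo e d + real l / (real k + 1) * (bin_hi e d - bin_lo e d)) [1..<k+1]"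

definition resample_f :: "real list \<Rightarrow> real list" where
  "resample_f X = sorted_list_of_multiset
     (\<Sum>(e, d) \<in> occ_bins X. mset (fair_points e d (H X e d)))"

end

theory Submission
  imports Defs
begin

lemma pw10_step: "10 * 10 powr (real_of_int e - 1) = 10 powr (real_of_int e)"
proof -
  have "10 powr (real_of_int e) = 10 powr (real_of_int e - 1 + 1)" by simp
  also have "\<dots> = 10 powr (real_of_int e - 1) * 10" by (subst powr_add) simp
  finally show ?thesis by simp
qed

lemma bins_sep_e:
  assumes "d \<in> {10..99}" "d' \<in> {10..99}" "e < e'"
  shows "bin_hi e d \<le> bin_lo e' d'"
proof -
  define p where "p = 10 powr (real_of_int e - 1)"
  define p' where "p' = 10 powr (real_of_int e' - 1)"
  have pp: "p > 0" unfolding p_def by simp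
  have "10 * p = 10 powr (real_of_int e)" unfolding p_def by (rule pw10_step)
  also have "\<dots> \<le> p'" unfolding p'_def using assms(3) by (intro powr_mono) auto
  finally have le: "10 * p \<le> p'" .
  have "bin_hi e d = (real d + 1) * p" unfolding bin_hi_def p_def by simp
  also have "\<dots> \<le> 100 * p" using assms(1) pp by (intro mult_right_mono) auto
  also have "\<dots> \<le> 10 * p'" using le by simp
  also have "\<dots> \<le> real d' * p'" using assms(2) pp le by (intro mult_right_mono) auto
  also have "\<dots> = bin_lo e' d'" unfolding bin_lo_def p'_def by simp
  finally show ?thesis .
qed

lemma bins_sep_d:
  assumes "d < d'"
  shows "bin_hi e d \<le> bin_lo e d'"
proof -
  have "real d + 1 \<le> real d'" using assms by simp
  then show ?thesis unfolding bin_hi_def bin_lo_def by (intro mult_right_mono) auto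
qed

lemma lo_lt_hi: "bin_lo e d < bin_hi e d"
  unfolding bin_lo_def bin_hi_def by (simp add: distrib_right)

lemma bin_unique:
  assumes "d \<in> {10..99}" "d' \<in> {10..99}" "in_bin e d x" "in_bin e' d' x"
  shows "e = e' \<and> d = d'"
proof (rule ccontr)
  assume ne: "\<not> (e = e' \<and> d = d')"
  consider "e < e'" | "e' < e" | "e = e'" "d < d'" | "e = e'" "d' < d"
    using ne by linarith
  then show False
  proof cases
    case 1 then show ?thesis using bins_sep_e[OF assms(1,2) 1] assms(3,4) unfolding in_bin_def by linarith
  next
    case 2 then show ?thesis using bins_sep_e[OF assms(2,1) 2] assms(3,4) unfolding in_bin_def by linarith
  next
    case 3 then show ?thesis using bins_sep_d[OF 3(2), of e] assms(3,4) unfolding in_bin_def by simp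
  next
    case 4 then show ?thesis using bins_sep_d[OF 4(2), of e] assms(3,4) unfolding in_bin_def by simp
  qed
qed

lemma bin_exists:
  assumes "x > (0::real)"
  shows "\<exists>e d. d \<in> {10..99} \<and> in_bin e d x"
proof -
  define L where "L = log 10 x"
  define e where "e = \<lfloor>L\<rfloor>"
  have xL: "10 powr L = x" unfolding L_def using assms by simp
  have "10 powr (real_of_int e) \<le> 10 powr L" unfolding e_def by (intro powr_mono) auto
  hence lo: "10 powr (real_of_int e) \<le> x" using xL by simp
  have "10 powr L < 10 powr (real_of_int e + 1)" unfolding e_def by (subst powr_less_cancel_iff) auto
  hence hi: "x < 10 powr (real_of_int (e + 1))" using xL by simp
  define p where "p = 10 powr (real_of_int e - 1)"
  have pp: "p > 0" unfolding p_def by simp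
  have p1: "10 * p = 10 powr (real_of_int e)" unfolding p_def by (rule pw10_step)
  have p2: "10 * 10 powr (real_of_int e) = 10 powr (real_of_int (e+1))"
    using pw10_step[of "e+1"] by simp
  define t where "t = x / p"
  have t1: "10 \<le> t" using lo p1 pp unfolding t_def by (simp add: field_simps)
  have t2: "t < 100" using hi p1 p2 pp unfolding t_def by (simp add: field_simps)
  define d where "d = nat \<lfloor>t\<rfloor>"
  have dt: "real d \<le> t" "t < real d + 1" unfolding d_def using t1 by linarith+
  have d1: "d \<ge> 10" unfolding d_def using t1 by linarith
  have d2: "d \<le> 99" unfolding d_def using t2 by linarith
  have "real d * p \<le> x" using dt pp unfolding t_def by (simp add: field_simps)
  moreover have "x < (real d + 1) * p" using dt pp unfolding t_def by (simp add: field_simps)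
  ultimately have "in_bin e d x" unfolding in_bin_def bin_lo_def bin_hi_def p_def by simp
  then show ?thesis using d1 d2 by auto
qed

lemma bin_mono:
  assumes "d \<in> {10..99}" "d' \<in> {10..99}" "in_bin e d x" "in_bin e' d' y" "x \<le> y"
  shows "bin_lo e d \<le> bin_lo e' d'"
proof -
  consider "e < e'" | "e' < e" | "e = e'" "d \<le> d'" | "e = e'" "d' < d"
    by linarith
  then show ?thesis
  proof cases
    case 1 then show ?thesis using bins_sep_e[OF assms(1,2) 1] lo_lt_hi[of e d] by linarith
  next
    case 2 then show ?thesis using bins_sep_e[OF assms(2,1) 2] assms(3,4,5) unfolding in_bin_def by linarith
  next
    case 3 then show ?thesis unfolding bin_lo_def by (simp add: mult_right_mono)
  next
    case 4 then show ?thesis using bins_sep_d[OF 4(2), of e] assms(3,4,5) unfolding in_bin_def by simp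
  qed
qed

lemma lo_inj:
  assumes "d \<in> {10..99}" "d' \<in> {10..99}" "bin_lo e d = bin_lo e' d'"
  shows "e = e' \<and> d = d'"
proof -
  have "in_bin e d (bin_lo e d)" "in_bin e' d' (bin_lo e' d')"
    unfolding in_bin_def using lo_lt_hi by auto
  then show ?thesis using bin_unique[OF assms(1,2)] assms(3) by metis
qed

definition bin_of :: "real \<Rightarrow> int \<times> nat" where
  "bin_of x = (SOME b. snd b \<in> {10..99} \<and> in_bin (fst b) (snd b) x)"

lemma bin_of:
  assumes "x > 0"
  shows "snd (bin_of x) \<in> {10..99} \<and> in_bin (fst (bin_of x)) (snd (bin_of x)) x"
proof -
  obtain e d where "d \<in> {10..99} \<and> in_bin e d x" using bin_exists[OF assms] by blast
  then have "\<exists>b. snd b \<in> {10..99} \<and> in_bin (fst b) (snd b) x" by (intro exI[of _ "(e,d)"]) simp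
  then show ?thesis unfolding bin_of_def by (rule someI_ex)
qed

lemma bin_of_eq:
  assumes "d \<in> {10..99}" "in_bin e d x"
  shows "bin_of x = (e, d)"
proof -
  have x0: "x > 0" using assms unfolding in_bin_def bin_lo_def
    by (smt (verit) atLeastAtMost_iff of_nat_le_0_iff powr_gt_zero zero_less_mult_iff
        numeral_le_iff le_numeral_extra(3) not_numeral_le_zero)
  show ?thesis using bin_unique[OF assms(1) _ assms(2)] bin_of[OF x0] by (metis prod.collapse)
qed

definition g :: "real \<Rightarrow> real" where
  "g x = bin_lo (fst (bin_of x)) (snd (bin_of x))"

lemma g_eq: "d \<in> {10..99} \<Longrightarrow> in_bin e d x \<Longrightarrow> g x = bin_lo e d"
  unfolding g_def using bin_of_eq by simp


lemma g_mono: "0 < x \<Longrightarrow> x \<le> y \<Longrightarrow> g x \<le> g y"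
  unfolding g_def using bin_of[of x] bin_of[of y] bin_mono by auto

definition S :: "real list \<Rightarrow> real multiset" where
  "S X = (\<Sum>(e, d) \<in> occ_bins X. replicate_mset (H X e d) (bin_lo e d))"

lemma occ_iff: "(e, d) \<in> occ_bins X \<longleftrightarrow> d \<in> {10..99} \<and> H X e d \<noteq> 0"
  unfolding occ_bins_def by simp

lemma H_filter: "H X e d = length (filter (in_bin e d) X)"
  unfolding H_def by (simp add: length_filter_conv_card)

lemma occ_witness:
  assumes "(e, d) \<in> occ_bins X"
  shows "\<exists>x\<in>set X. in_bin e d x"
proof -
  have "length (filter (in_bin e d) X) \<noteq> 0" using assms unfolding occ_iff H_filter by simp
  then obtain x where "x \<in> set (filter (in_bin e d) X)"
    by (metis length_0_conv list.set_intros(1) neq_Nil_conv)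
  then show ?thesis by auto
qed

lemma occ_fin:
  assumes "\<forall>x \<in> set X. x > 0"
  shows "finite (occ_bins X)"
proof -
  have "occ_bins X \<subseteq> bin_of ` set X"
  proof
    fix b assume b: "b \<in> occ_bins X"
    obtain e d where bed: "b = (e, d)" by (cases b)
    have d: "d \<in> {10..99}" using b bed occ_iff by auto
    obtain x where "x \<in> set X" "in_bin e d x" using occ_witness b bed by blast
    then show "b \<in> bin_of ` set X" using bin_of_eq[OF d] bed by force
  qed
  then show ?thesis using finite_subset by blast
qed

lemma img_sum: "image_mset f (sum F A) = sum (\<lambda>a. image_mset f (F a)) A"
  by (induct A rule: infinite_finite_induct) auto

lemma in_sum: "y \<in># sum F A \<Longrightarrow> \<exists>a\<in>A. y \<in># F a"
  by (induct A rule: infinite_finite_induct) auto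

lemma img_X:
  assumes pos: "\<forall>x \<in> set X. x > 0"
  shows "image_mset g (mset X) = S X"
proof (rule multiset_eqI)
  fix v
  have fin: "finite (occ_bins X)" using occ_fin[OF pos] .
  have L: "count (image_mset g (mset X)) v = length (filter (\<lambda>x. v = g x) X)"
  proof -
    have "image_mset g (mset X) = mset (map g X)" by simp
    then have "count (image_mset g (mset X)) v = length (filter ((=) v) (map g X))"
      by (simp only: count_mset count_list_eq_length_filter)
    also have "\<dots> = length (filter (\<lambda>x. v = g x) X)"
      unfolding filter_map length_map by (rule arg_cong[where f=length], rule filter_cong) auto
    finally show ?thesis .
  qed
  have "count (S X) v = (\<Sum>b\<in>occ_bins X. if bin_lo (fst b) (snd b) = v then H X (fst b) (snd b) else 0)"
    unfolding S_def count_sum by (intro sum.cong) (auto split: prod.splits)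
  also have "\<dots> = (\<Sum>b\<in>{b \<in> occ_bins X. bin_lo (fst b) (snd b) = v}. H X (fst b) (snd b))"
    using fin by (simp add: sum.inter_filter)
  finally have R: "count (S X) v = (\<Sum>b\<in>{b \<in> occ_bins X. bin_lo (fst b) (snd b) = v}. H X (fst b) (snd b))" .
  show "count (image_mset g (mset X)) v = count (S X) v"
  proof (cases "\<exists>x\<in>set X. g x = v")
    case True
    then obtain x where x: "x \<in> set X" "g x = v" by blast
    obtain e0 d0 where b0: "bin_of x = (e0, d0)" by (cases "bin_of x")
    have d0: "d0 \<in> {10..99}" and ib: "in_bin e0 d0 x" using bin_of[of x] pos x b0 by auto
    have gv: "bin_lo e0 d0 = v" using x b0 unfolding g_def by simp
    have H0: "H X e0 d0 \<noteq> 0" unfolding H_filter using x(1) ib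
      by (metis filter_empty_conv length_0_conv)
    have set1: "{b \<in> occ_bins X. bin_lo (fst b) (snd b) = v} = {(e0, d0)}"
    proof (intro equalityI subsetI)
      fix b assume "b \<in> {b \<in> occ_bins X. bin_lo (fst b) (snd b) = v}"
      then show "b \<in> {(e0, d0)}" using lo_inj[OF _ d0] gv occ_iff
        by (cases b) auto
    qed (use d0 H0 gv occ_iff in auto)
    have filt: "filter (\<lambda>x. v = g x) X = filter (in_bin e0 d0) X"
    proof (rule filter_cong[OF refl])
      fix y assume y: "y \<in> set X"
      have y0: "y > 0" using pos y by auto
      show "(v = g y) = in_bin e0 d0 y"
      proof
        assume "v = g y"
        then have "bin_lo (fst (bin_of y)) (snd (bin_of y)) = bin_lo e0 d0" using gv unfolding g_def by simp
        then have "bin_of y = (e0, d0)" using lo_inj[OF _ d0] bin_of[OF y0] by (metis prod.collapse)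
        then show "in_bin e0 d0 y" using bin_of[OF y0] by simp
      next
        assume "in_bin e0 d0 y"
        then show "v = g y" using g_eq[OF d0] gv by simp
      qed
    qed
    show ?thesis using L R set1 filt H_filter by simp
  next
    case False
    have set0: "{b \<in> occ_bins X. bin_lo (fst b) (snd b) = v} = {}"
    proof (rule ccontr)
      assume "{b \<in> occ_bins X. bin_lo (fst b) (snd b) = v} \<noteq> {}"
      then obtain e d where ed: "(e, d) \<in> occ_bins X" "bin_lo e d = v" by auto
      obtain x where "x \<in> set X" "in_bin e d x" using occ_witness[OF ed(1)] by blast
      then show False using False g_eq ed occ_iff by metis
    qed
    have "filter (\<lambda>x. v = g x) X = []" using False by (auto simp: filter_empty_conv)
    then show ?thesis using L R set0 by simp
  qed
qed


lemma pm_bounds: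
  fixes a b :: real
  assumes "0 < a" "a < b"
  shows "a \<le> 2 * a * b / (a + b)" "2 * a * b / (a + b) < b"
proof -
  have ab: "a + b > 0" using assms by linarith
  have "a * a \<le> a * b" using assms by (intro mult_left_mono) auto
  then have "a * (a + b) \<le> 2 * a * b" by (simp add: algebra_simps)
  then show "a \<le> 2 * a * b / (a + b)" using ab by (simp add: pos_le_divide_eq)
  have "a * b < b * b" using assms by (intro mult_strict_right_mono) auto
  then have "2 * a * b < b * (a + b)" by (simp add: algebra_simps)
  then show "2 * a * b / (a + b) < b" using ab by (simp add: pos_divide_less_eq)
qed

lemma lo_pos: "d \<in> {10..99} \<Longrightarrow> 0 < bin_lo e d"
  unfolding bin_lo_def by auto

lemma pm_in_bin: "d \<in> {10..99} \<Longrightarrow> in_bin e d (paretro_mid e d)"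
  unfolding in_bin_def paretro_mid_def using pm_bounds[OF lo_pos lo_lt_hi] by auto

lemma fair_in_bin:
  assumes "d \<in> {10..99}" "y \<in> set (fair_points e d k)"
  shows "in_bin e d y"
proof -
  obtain l where l: "1 \<le> l" "l \<le> k" and y: "y = bin_lo e d + real l / (real k + 1) * (bin_hi e d - bin_lo e d)"
    using assms(2) unfolding fair_points_def by auto
  define t where "t = real l / (real k + 1)"
  have t0: "0 \<le> t" and t1: "t < 1" unfolding t_def using l by (auto simp: field_simps)
  have w: "0 < bin_hi e d - bin_lo e d" using lo_lt_hi by simp
  have "t * (bin_hi e d - bin_lo e d) < 1 * (bin_hi e d - bin_lo e d)"
    using t1 w by (intro mult_strict_right_mono) auto
  moreover have "0 \<le> t * (bin_hi e d - bin_lo e d)" using t0 w by simp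
  ultimately show ?thesis unfolding in_bin_def y t_def[symmetric] by auto
qed

lemma length_fair: "length (fair_points e d k) = k"
  unfolding fair_points_def by simp

lemma img_P:
  assumes pos: "\<forall>x \<in> set X. x > 0"
  shows "image_mset g (mset (resample_p X)) = S X"
proof -
  have fin: "finite (occ_bins X)" using occ_fin[OF pos] .
  have "image_mset g (mset (resample_p X)) =
     (\<Sum>b\<in>occ_bins X. image_mset g ((\<lambda>(e, d). replicate_mset (H X e d) (paretro_mid e d)) b))"
    unfolding resample_p_def by (simp add: img_sum)
  also have "\<dots> = S X" unfolding S_def
  proof (intro sum.cong refl)
    fix b assume b: "b \<in> occ_bins X"
    obtain e d where bed: "b = (e, d)" by (cases b)
    have d: "d \<in> {10..99}" using b bed occ_iff by auto
    show "image_mset g ((\<lambda>(e, d). replicate_mset (H X e d) (paretro_mid e d)) b) =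
          (\<lambda>(e, d). replicate_mset (H X e d) (bin_lo e d)) b"
      using bed g_eq[OF d pm_in_bin[OF d]] by simp
  qed
  finally show ?thesis .
qed

lemma img_F:
  assumes pos: "\<forall>x \<in> set X. x > 0"
  shows "image_mset g (mset (resample_f X)) = S X"
proof -
  have fin: "finite (occ_bins X)" using occ_fin[OF pos] .
  have "image_mset g (mset (resample_f X)) =
     (\<Sum>b\<in>occ_bins X. image_mset g ((\<lambda>(e, d). mset (fair_points e d (H X e d))) b))"
    unfolding resample_f_def by (simp add: img_sum)
  also have "\<dots> = S X" unfolding S_def
  proof (intro sum.cong refl)
    fix b assume b: "b \<in> occ_bins X"
    obtain e d where bed: "b = (e, d)" by (cases b)
    have d: "d \<in> {10..99}" using b bed occ_iff by auto
    have "map g (fair_points e d (H X e d)) = map (\<lambda>_. bin_lo e d) (fair_points e d (H X e d))"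
      using g_eq[OF d fair_in_bin[OF d]] by (intro map_cong) auto
    also have "\<dots> = replicate (H X e d) (bin_lo e d)" by (simp add: map_replicate_const length_fair)
    finally have "image_mset g (mset (fair_points e d (H X e d))) = replicate_mset (H X e d) (bin_lo e d)"
      by (metis mset_map mset_replicate)
    then show "image_mset g ((\<lambda>(e, d). mset (fair_points e d (H X e d))) b) =
          (\<lambda>(e, d). replicate_mset (H X e d) (bin_lo e d)) b"
      using bed by simp
  qed
  finally show ?thesis .
qed

lemma sorted_g: "sorted xs \<Longrightarrow> \<forall>x\<in>set xs. x > 0 \<Longrightarrow> sorted (map g xs)"
  unfolding sorted_map by (erule sorted_wrt_mono_rel[rotated]) (auto intro: g_mono)

lemma same_bin:
  assumes pos: "\<forall>x \<in> set X. x > 0"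
    and M: "image_mset g M = S X"
    and Mpos: "\<forall>y \<in># M. y > 0"
    and i: "i < length X"
  shows "length (sorted_list_of_multiset M) = length X"
    and "g (sort X ! i) = g (sorted_list_of_multiset M ! i)"
proof -
  define R where "R = sorted_list_of_multiset M"
  have mR: "mset R = M" unfolding R_def by simp
  have "size M = size (image_mset g M)" by simp
  also have "\<dots> = size (mset X)" using M img_X[OF pos] by (metis size_image_mset)
  also have "\<dots> = length X" by simp
  finally show len: "length (sorted_list_of_multiset M) = length X"
    using mR unfolding R_def by (metis size_mset)
  have s1: "sorted (map g (sort X))" using pos by (intro sorted_g) auto
  have s2: "sorted (map g R)" using Mpos mR unfolding R_def by (intro sorted_g) auto
  have "mset (map g (sort X)) = mset (map g R)"
    using M img_X[OF pos] mR by simp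
  then have "sort (map g R) = map g (sort X)" using s1 by (intro properties_for_sort) auto
  then have "map g R = map g (sort X)" using s2 by (simp add: sorted_sort_id)
  then have "map g R ! i = map g (sort X) ! i" by simp
  then show "g (sort X ! i) = g (sorted_list_of_multiset M ! i)"
    using i len unfolding R_def by simp
qed

lemma bound_p:
  assumes d: "d \<in> {10..99}" and x: "in_bin e d x"
  shows "\<bar>x - paretro_mid e d\<bar> \<le> x / 21"
proof -
  define a where "a = bin_lo e d"
  define b where "b = bin_hi e d"
  define p where "p = 10 powr (real_of_int e - 1)"
  have pp: "p > 0" unfolding p_def by simp
  have a0: "0 < a" unfolding a_def using lo_pos[OF d] .
  have ab: "a < b" unfolding a_def b_def using lo_lt_hi .
  have "10 * (real d + 1) * p \<le> 11 * real d * p" using d pp by (intro mult_right_mono) auto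
  then have key: "10 * b \<le> 11 * a" unfolding a_def b_def bin_lo_def bin_hi_def p_def by simp
  define m where "m = 2 * a * b / (a + b)"
  have apb: "a + b > 0" using a0 ab by simp
  have m1: "20 * b \<le> 21 * m"
  proof -
    have "20 * b * (a + b) \<le> 42 * a * b"
    proof -
      have "20 * b * (a + b) = b * (20 * a + 20 * b)" by (simp add: algebra_simps)
      also have "\<dots> \<le> b * (42 * a)" using key ab a0 by (intro mult_left_mono) auto
      finally show ?thesis by (simp add: algebra_simps)
    qed
    then show ?thesis unfolding m_def using apb by (simp add: field_simps)
  qed
  have m2: "21 * m \<le> 22 * a"
  proof -
    have "42 * a * b \<le> 22 * a * (a + b)"
    proof -
      have "42 * a * b = a * (42 * b)" by (simp add: algebra_simps)
      also have "\<dots> \<le> a * (22 * a + 22 * b)" using key ab a0 by (intro mult_left_mono) auto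
      finally show ?thesis by (simp add: algebra_simps)
    qed
    then show ?thesis unfolding m_def using apb by (simp add: field_simps)
  qed
  have xa: "a \<le> x" "x < b" using x unfolding in_bin_def a_def b_def by auto
  have "\<bar>x - m\<bar> \<le> x / 21" using m1 m2 xa by (auto simp: abs_if field_simps)
  then show ?thesis unfolding m_def a_def b_def paretro_mid_def .
qed

lemma bound_f:
  assumes d: "d \<in> {10..99}" and x: "in_bin e d x" and y: "in_bin e d y"
  shows "\<bar>x - y\<bar> \<le> x / 10"
proof -
  define p where "p = 10 powr (real_of_int e - 1)"
  have pp: "p > 0" unfolding p_def by simp
  have h: "10 * p \<le> real d * p" using d pp by (intro mult_right_mono) auto
  have xb: "real d * p \<le> x" "x < real d * p + p" "real d * p \<le> y" "y < real d * p + p"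
    using x y unfolding in_bin_def bin_lo_def bin_hi_def p_def[symmetric] by (auto simp: algebra_simps)
  have "x - y \<le> x / 10 \<and> y - x \<le> x / 10" using h xb by linarith
  then show ?thesis using abs_le_iff[of "x - y" "x / 10"] by linarith
qed

lemma bound_f1:
  assumes d: "d \<in> {10..99}" and x: "in_bin e d x"
  shows "\<bar>x - (bin_lo e d + 1 / 2 * (bin_hi e d - bin_lo e d))\<bar> \<le> x / 20"
proof -
  define p where "p = 10 powr (real_of_int e - 1)"
  have pp: "p > 0" unfolding p_def by simp
  have h: "10 * p \<le> real d * p" using d pp by (intro mult_right_mono) auto
  have xb: "real d * p \<le> x" "x < real d * p + p"
    using x unfolding in_bin_def bin_lo_def bin_hi_def p_def[symmetric] by (auto simp: algebra_simps)
  have e: "bin_lo e d + 1 / 2 * (bin_hi e d - bin_lo e d) = real d * p + p / 2"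
    unfolding bin_lo_def bin_hi_def p_def[symmetric] by (simp add: algebra_simps)
  have "x - (real d * p + p / 2) \<le> x / 20 \<and> (real d * p + p / 2) - x \<le> x / 20" using h xb by linarith
  then show ?thesis unfolding e using abs_le_iff[of "x - (real d * p + p / 2)" "x / 20"] by linarith
qed


lemma locate:
  assumes pos: "\<forall>x \<in> set X. x > 0" and n: "length X > 0" and q: "0 < q" "q \<le> 1"
    and M: "image_mset g M = S X"
    and Mb: "\<forall>y \<in># M. \<exists>e d. (e, d) \<in> occ_bins X \<and> in_bin e d y \<and> P e d y"
  shows "\<exists>e d. (e, d) \<in> occ_bins X \<and> in_bin e d (Q1 q X)
     \<and> in_bin e d (Q1 q (sorted_list_of_multiset M)) \<and> P e d (Q1 q (sorted_list_of_multiset M))"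
proof -
  define i where "i = nat \<lceil>q * real (length X)\<rceil> - 1"
  have "q * real (length X) \<le> real (length X)" using q n by (simp add: mult_le_cancel_right1)
  then have "\<lceil>q * real (length X)\<rceil> \<le> int (length X)" by (simp add: ceiling_le)
  then have i: "i < length X" unfolding i_def using n by linarith
  have Mpos: "\<forall>y \<in># M. y > 0"
  proof
    fix y assume "y \<in># M"
    then obtain e d where "(e, d) \<in> occ_bins X" "in_bin e d y" using Mb by blast
    then show "y > 0" using lo_pos[of d e] occ_iff unfolding in_bin_def by force
  qed
  define R where "R = sorted_list_of_multiset M"
  have len: "length R = length X" and gg: "g (sort X ! i) = g (R ! i)"
    using same_bin[OF pos M Mpos i] unfolding R_def by auto
  have QX: "Q1 q X = sort X ! i" unfolding Q1_def i_def by simp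
  have sR: "sort R = R" unfolding R_def by (rule sorted_sort_id) simp
  have QR: "Q1 q R = R ! i" unfolding Q1_def sR len i_def ..
  have "R ! i \<in> set R" using i len by simp
  then have "R ! i \<in># M" unfolding R_def by simp
  then obtain e d where ed: "(e, d) \<in> occ_bins X" "in_bin e d (R ! i)" "P e d (R ! i)" using Mb by blast
  have d: "d \<in> {10..99}" using ed occ_iff by auto
  have xs: "sort X ! i \<in> set X" using i by (metis length_sort nth_mem set_sort)
  then have x0: "sort X ! i > 0" using pos by auto
  have "g (sort X ! i) = bin_lo e d" using gg g_eq[OF d ed(2)] by simp
  then have "bin_lo (fst (bin_of (sort X ! i))) (snd (bin_of (sort X ! i))) = bin_lo e d"
    unfolding g_def .
  then have "bin_of (sort X ! i) = (e, d)" using lo_inj[OF _ d] bin_of[OF x0] by (metis prod.collapse)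
  then have "in_bin e d (sort X ! i)" using bin_of[OF x0] by simp
  then show ?thesis using ed QX QR unfolding R_def by auto
qed

theorem mainTheorem11:
  fixes X :: "real list" and q :: real
  assumes "length X > 0"
    and "\<forall>x \<in> set X. x > 0"
    and "0 < q" and "q \<le> 1"
  shows "\<bar>Q1 q X - Q1 q (resample_p X)\<bar> \<le> Q1 q X / 21
    \<and> \<bar>Q1 q X - Q1 q (resample_f X)\<bar> \<le> Q1 q X / 10
    \<and> ((\<exists>e d. d \<in> {10..99} \<and> in_bin e d (Q1 q X) \<and> H X e d = 1) \<longrightarrow>
         \<bar>Q1 q X - Q1 q (resample_f X)\<bar> \<le> Q1 q X / 20)"
proof -
  note pos = assms(2)
  define Mp where "Mp = (\<Sum>(e, d) \<in> occ_bins X. replicate_mset (H X e d) (paretro_mid e d))"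
  define Mf where "Mf = (\<Sum>(e, d) \<in> occ_bins X. mset (fair_points e d (H X e d)))"
  have Rp: "resample_p X = sorted_list_of_multiset Mp" unfolding Mp_def resample_p_def ..
  have Rf: "resample_f X = sorted_list_of_multiset Mf" unfolding Mf_def resample_f_def ..
  have gp: "image_mset g Mp = S X" using img_P[OF pos] unfolding Rp by simp
  have gf: "image_mset g Mf = S X" using img_F[OF pos] unfolding Rf by simp
  have bp: "\<forall>y \<in># Mp. \<exists>e d. (e, d) \<in> occ_bins X \<and> in_bin e d y \<and> y = paretro_mid e d"
  proof
    fix y assume "y \<in># Mp"
    then obtain b where b: "b \<in> occ_bins X" "y \<in># (\<lambda>(e, d). replicate_mset (H X e d) (paretro_mid e d)) b"
      unfolding Mp_def by (rule in_sum[THEN bexE])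
    obtain e d where bed: "b = (e, d)" by (cases b)
    have d: "d \<in> {10..99}" using b bed occ_iff by auto
    have "y \<in># replicate_mset (H X e d) (paretro_mid e d)" using b(2) bed by simp
    then have "y = paretro_mid e d" by (metis in_replicate_mset)
    then show "\<exists>e d. (e, d) \<in> occ_bins X \<and> in_bin e d y \<and> y = paretro_mid e d"
      using b(1) bed pm_in_bin[OF d] by blast
  qed
  have bf: "\<forall>y \<in># Mf. \<exists>e d. (e, d) \<in> occ_bins X \<and> in_bin e d y \<and> y \<in> set (fair_points e d (H X e d))"
  proof
    fix y assume "y \<in># Mf"
    then obtain b where b: "b \<in> occ_bins X" "y \<in># (\<lambda>(e, d). mset (fair_points e d (H X e d))) b"
      unfolding Mf_def by (rule in_sum[THEN bexE])
    obtain e d where bed: "b = (e, d)" by (cases b)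
    have d: "d \<in> {10..99}" using b bed occ_iff by auto
    have "y \<in> set (fair_points e d (H X e d))" using b(2) bed by simp
    then show "\<exists>e d. (e, d) \<in> occ_bins X \<and> in_bin e d y \<and> y \<in> set (fair_points e d (H X e d))"
      using b(1) bed fair_in_bin[OF d] by blast
  qed
  obtain e d where p: "(e, d) \<in> occ_bins X" "in_bin e d (Q1 q X)" "in_bin e d (Q1 q (resample_p X))"
    "Q1 q (resample_p X) = paretro_mid e d"
    using locate[OF pos assms(1,3,4) gp bp] unfolding Rp by blast
  have c1: "\<bar>Q1 q X - Q1 q (resample_p X)\<bar> \<le> Q1 q X / 21"
    using bound_p[OF _ p(2)] p(1,4) occ_iff by auto
  obtain e' d' where f: "(e', d') \<in> occ_bins X" "in_bin e' d' (Q1 q X)" "in_bin e' d' (Q1 q (resample_f X))"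
    "Q1 q (resample_f X) \<in> set (fair_points e' d' (H X e' d'))"
    using locate[OF pos assms(1,3,4) gf bf] unfolding Rf by blast
  have d': "d' \<in> {10..99}" using f(1) occ_iff by auto
  have c2: "\<bar>Q1 q X - Q1 q (resample_f X)\<bar> \<le> Q1 q X / 10"
    using bound_f[OF d' f(2,3)] .
  have c3: "\<bar>Q1 q X - Q1 q (resample_f X)\<bar> \<le> Q1 q X / 20"
    if ex: "\<exists>e d. d \<in> {10..99} \<and> in_bin e d (Q1 q X) \<and> H X e d = 1"
  proof -
    obtain e1 d1 where e1: "d1 \<in> {10..99}" "in_bin e1 d1 (Q1 q X)" "H X e1 d1 = 1" using ex by blast
    have "e1 = e' \<and> d1 = d'" using bin_unique[OF e1(1) d' e1(2) f(2)] .
    then have "H X e' d' = 1" using e1 by simp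
    then have "Q1 q (resample_f X) = bin_lo e' d' + 1 / 2 * (bin_hi e' d' - bin_lo e' d')"
      using f(4) unfolding fair_points_def by simp
    then show ?thesis using bound_f1[OF d' f(2)] by simp
  qed
  show ?thesis using c1 c2 c3 by blast
qed

end
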